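(* For a coloured integer $k_x$, let $G_{k_x}(a,b,q)=\sum a^{u}b^{v}q^{n}$, the sum running over all admissible coloured partitions (including the empty one) whose largest part $\lambda_1$ satisfies $\lambda_1\le k_x$ in the total order of coloured integers, where $n,u,v$ are the size and the two weights of the partition. Then for all integers $k \geq 1$, as formal power series, \begin{align*} G_{(2k+1)_{ab}}(a,b,q) &= (1+aq)\, G_{(2k)_{a}}(b,aq,q),\\ G_{(2k+1)_{b^2}}(a,b,q) &= (1+aq)\, G_{(2k)_{b}}(b,aq,q),\\ G_{(2k+2)_{ab}}(a,b,q) &= (1+aq)\, G_{(2k+1)_{a}}(b,aq,q),\\ G_{(2k+1)_{a^2}}(a,b,q) &= (1+aq)\, G_{(2k-1)_{b}}(b,aq,q). \end{align*}
   Context: Coloured integers: every positive integer $k$ occurs in the three colours $a$, $b$, $ab$ (written $k_a$, $k_b$, $k_{ab}$). In addition, odd positive integers occur in the colours $a^2$ and $b^2$: $k_{b^2}$ for every odd $k\ge 1$ and $k_{a^2}$ for every odd $k \geq 3$. The integer value of $k_x$ is $k$ and its colour is $x$. These coloured integers are totally ordered by $$1_{ab} < 1_a < 1_{b^2} <1_{b} <2_{ab} < 2_a <3_{a^2} < 2_{b} <3_{ab} < 3_a < 3_{b^2} <3_b <4_{ab}<4_a<5_{a^2}<4_b<5_{ab}<\cdots,$$ that is, for every odd $m\ge1$: $m_{ab}<m_a<m_{b^2}<m_b<(m+1)_{ab}<(m+1)_a<(m+2)_{a^2}<(m+1)_b<(m+2)_{ab}$. Difference conditions: for a coloured integer $\lambda$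 (the "upper" part) of colour $x$ and a coloured integer $\mu$ (the "lower" part) of colour $y$, a minimal difference $A(\lambda,\mu)$ is defined as follows, where the row is determined by the colour and the parity of the integer value of $\lambda$, and the entries are listed for $y = a, b, ab, a^2, b^2$ in this order: - $\lambda$ of colour $a$, odd: $2,2,1,2,2$; - $\lambda$ of colour $b^2$: $2,3,2,2,4$; - $\lambda$ of colour $b$, odd: $1,2,1,2,2$; - $\lambda$ of colour $ab$, even: $2,2,2,3,3$; - $\lambda$ of colour $a$, even: $2,2,2,3,3$; - $\lambda$ of colour $a^2$: $3,3,3,4,4$; - $\lambda$ of colour $b$, even: $1,2,1,1,3$; - $\lambda$ of colour $ab$, odd: $2,3,2,2,3$. An admissible coloured partition is a finite (possibly empty) sequence $\lambda_1,\dots,\lambda_s$ of coloured integers, none of which equals $1_{ab}$ or $1_{b^2}$, such that for every $1\le i<s$ the integer values satisfy $\lambda_i-\lambda_{i+1}\ge A(\lambda_i,\lambda_{i+1})$. Its size $n$ is the sum of the integer values of its parts. Its weight $u$ is the number of parts of colour $a$ or $ab$ plus twice the number of parts of colour $a^2$; its weight $v$ is the number of parts of colour $b$ or $ab$ plus twice the number of parts of colour $b^2$. *)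

theory Defs
  imports Main
begin

datatype colour = Ca | Cb | Cab | Ca2 | Cb2

type_synonym cint = "nat \<times> colour"

definition valid_cint :: "cint \<Rightarrow> bool" where
  "valid_cint c = (case c of
     (k, Ca) \<Rightarrow> k \<ge> 1
   | (k, Cb) \<Rightarrow> k \<ge> 1
   | (k, Cab) \<Rightarrow> k \<ge> 1
   | (k, Cb2) \<Rightarrow> k \<ge> 1 \<and> odd k
   | (k, Ca2) \<Rightarrow> k \<ge> 3 \<and> odd k)"

text \<open>Position of a coloured integer in the total order
  m_ab < m_a < m_b2 < m_b < (m+1)_ab < (m+1)_a < (m+2)_a2 < (m+1)_b < (m+2)_ab (m odd).\<close>
definition ckey :: "cint \<Rightarrow> nat" where
  "ckey c = (case c of
     (k, Cab) \<Rightarrow> 4 * k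
   | (k, Ca) \<Rightarrow> 4 * k + 1
   | (k, Cb2) \<Rightarrow> 4 * k + 2
   | (k, Cb) \<Rightarrow> 4 * k + 3
   | (k, Ca2) \<Rightarrow> 4 * k - 2)"

definition cle :: "cint \<Rightarrow> cint \<Rightarrow> bool" where
  "cle c d = (ckey c \<le> ckey d)"

fun row :: "nat \<times> nat \<times> nat \<times> nat \<times> nat \<Rightarrow> colour \<Rightarrow> nat" where
  "row (x1, x2, x3, x4, x5) Ca = x1"
| "row (x1, x2, x3, x4, x5) Cb = x2"
| "row (x1, x2, x3, x4, x5) Cab = x3"
| "row (x1, x2, x3, x4, x5) Ca2 = x4"
| "row (x1, x2, x3, x4, x5) Cb2 = x5"

definition mindiff :: "cint \<Rightarrow> cint \<Rightarrow> nat" where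
  "mindiff l m = row (case l of
     (k, Ca) \<Rightarrow> if odd k then (2,2,1,2,2) else (2,2,2,3,3)
   | (k, Cb2) \<Rightarrow> (2,3,2,2,4)
   | (k, Cb) \<Rightarrow> if odd k then (1,2,1,2,2) else (1,2,1,1,3)
   | (k, Cab) \<Rightarrow> if odd k then (2,3,2,2,3) else (2,2,2,3,3)
   | (k, Ca2) \<Rightarrow> (3,3,3,4,4)) (snd m)"

definition admissible :: "cint list \<Rightarrow> bool" where
  "admissible p = ((\<forall>c \<in> set p. valid_cint c \<and> c \<noteq> (1, Cab) \<and> c \<noteq> (1, Cb2)) \<and>
     (\<forall>i. Suc i < length p \<longrightarrow>
        int (fst (p ! i)) - int (fst (p ! Suc i)) \<ge> int (mindiff (p ! i) (p ! Suc i))))"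

definition psize :: "cint list \<Rightarrow> nat" where
  "psize p = (\<Sum>c\<leftarrow>p. fst c)"

definition wt_u :: "cint list \<Rightarrow> nat" where
  "wt_u p = (\<Sum>c\<leftarrow>p. (case snd c of Ca \<Rightarrow> 1 | Cab \<Rightarrow> 1 | Ca2 \<Rightarrow> 2 | _ \<Rightarrow> 0))"

definition wt_v :: "cint list \<Rightarrow> nat" where
  "wt_v p = (\<Sum>c\<leftarrow>p. (case snd c of Cb \<Rightarrow> 1 | Cab \<Rightarrow> 1 | Cb2 \<Rightarrow> 2 | _ \<Rightarrow> 0))"

definition Gcoeff :: "cint \<Rightarrow> nat \<Rightarrow> nat \<Rightarrow> nat \<Rightarrow> nat" where
  "Gcoeff K u v n = card {p. admissible p \<and> (p \<noteq> [] \<longrightarrow> cle (hd p) K)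
      \<and> psize p = n \<and> wt_u p = u \<and> wt_v p = v}"

text \<open>A formal power series in a, b, q is represented by its coefficient function
  (u, v, n) \<mapsto> [a^u b^v q^n]. subst_b_aq F is F(b, aq, q); times_1_aq F is (1+aq) F.\<close>
definition subst_b_aq :: "(nat \<Rightarrow> nat \<Rightarrow> nat \<Rightarrow> nat) \<Rightarrow> nat \<Rightarrow> nat \<Rightarrow> nat \<Rightarrow> nat" where
  "subst_b_aq F u v n = (if u \<le> n then F v u (n - u) else 0)"

definition times_1_aq :: "(nat \<Rightarrow> nat \<Rightarrow> nat \<Rightarrow> nat) \<Rightarrow> nat \<Rightarrow> nat \<Rightarrow> nat \<Rightarrow> nat" where
  "times_1_aq F u v n = F u v n + (if u \<ge> 1 \<and> n \<ge> 1 then F (u - 1) v (n - 1) else 0)"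

end

theory Submission
  imports Defs "HOL-Library.Function_Algebras"
begin


type_synonym ser = "nat \<Rightarrow> nat \<Rightarrow> nat \<Rightarrow> int"

definition V :: "cint \<Rightarrow> bool" where
  "V c = (valid_cint c \<and> c \<noteq> (1, Cab) \<and> c \<noteq> (1, Cb2))"

definition dok :: "cint \<Rightarrow> cint \<Rightarrow> bool" where
  "dok c m = (int (fst m) + int (mindiff c m) \<le> int (fst c))"

definition wuc :: "cint \<Rightarrow> nat" where
  "wuc c = (case snd c of Ca \<Rightarrow> 1 | Cab \<Rightarrow> 1 | Ca2 \<Rightarrow> 2 | _ \<Rightarrow> 0)"
definition wvc :: "cint \<Rightarrow> nat" where
  "wvc c = (case snd c of Cb \<Rightarrow> 1 | Cab \<Rightarrow> 1 | Cb2 \<Rightarrow> 2 | _ \<Rightarrow> 0)"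

lemma wt_u_Cons[simp]: "wt_u (c # p) = wuc c + wt_u p"
  by (simp add: wt_u_def wuc_def)
lemma wt_v_Cons[simp]: "wt_v (c # p) = wvc c + wt_v p"
  by (simp add: wt_v_def wvc_def)
lemma psize_Cons[simp]: "psize (c # p) = fst c + psize p"
  by (simp add: psize_def)
lemma wt_Nil[simp]: "wt_u [] = 0" "wt_v [] = 0" "psize [] = 0"
  by (simp_all add: wt_u_def wt_v_def psize_def)

lemma adm_Nil[simp]: "admissible []"
  by (simp add: admissible_def)

lemma adm_Cons: "admissible (c # p) \<longleftrightarrow> V c \<and> admissible p \<and> (p \<noteq> [] \<longrightarrow> dok c (hd p))"
proof -
  have A: "(\<forall>i. Suc i < length (c # p) \<longrightarrow>
        int (fst ((c#p) ! i)) - int (fst ((c#p) ! Suc i)) \<ge> int (mindiff ((c#p) ! i) ((c#p) ! Suc i)))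
    \<longleftrightarrow> (p \<noteq> [] \<longrightarrow> dok c (hd p)) \<and> (\<forall>i. Suc i < length p \<longrightarrow>
        int (fst (p ! i)) - int (fst (p ! Suc i)) \<ge> int (mindiff (p ! i) (p ! Suc i)))"
  proof (cases p)
    case Nil then show ?thesis by simp
  next
    case (Cons x xs)
    show ?thesis
    proof
      assume H: "\<forall>i. Suc i < length (c # p) \<longrightarrow>
        int (fst ((c#p) ! i)) - int (fst ((c#p) ! Suc i)) \<ge> int (mindiff ((c#p) ! i) ((c#p) ! Suc i))"
      have "dok c (hd p)" using H[rule_format, of 0] Cons by (simp add: dok_def)
      moreover have "\<forall>i. Suc i < length p \<longrightarrow>
        int (fst (p ! i)) - int (fst (p ! Suc i)) \<ge> int (mindiff (p ! i) (p ! Suc i))"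
        using H by (metis Suc_less_eq length_Cons nth_Cons_Suc)
      ultimately show "(p \<noteq> [] \<longrightarrow> dok c (hd p)) \<and> (\<forall>i. Suc i < length p \<longrightarrow>
        int (fst (p ! i)) - int (fst (p ! Suc i)) \<ge> int (mindiff (p ! i) (p ! Suc i)))" by simp
    next
      assume H: "(p \<noteq> [] \<longrightarrow> dok c (hd p)) \<and> (\<forall>i. Suc i < length p \<longrightarrow>
        int (fst (p ! i)) - int (fst (p ! Suc i)) \<ge> int (mindiff (p ! i) (p ! Suc i)))"
      show "\<forall>i. Suc i < length (c # p) \<longrightarrow>
        int (fst ((c#p) ! i)) - int (fst ((c#p) ! Suc i)) \<ge> int (mindiff ((c#p) ! i) ((c#p) ! Suc i))"
      proof (intro allI impI)
        fix i assume i: "Suc i < length (c # p)"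
        show "int (fst ((c#p) ! i)) - int (fst ((c#p) ! Suc i)) \<ge> int (mindiff ((c#p) ! i) ((c#p) ! Suc i))"
        proof (cases i)
          case 0 then show ?thesis using H Cons by (simp add: dok_def)
        next
          case (Suc i') then show ?thesis using H i by simp
        qed
      qed
    qed
  qed
  show ?thesis unfolding admissible_def A V_def by auto
qed

lemma adm_hd_V: "admissible p \<Longrightarrow> p \<noteq> [] \<Longrightarrow> V (hd p)"
  by (cases p) (auto simp: adm_Cons)

lemma colour_UNIV: "(UNIV :: colour set) = {Ca, Cb, Cab, Ca2, Cb2}"
  using colour.exhaust by auto

lemma adm_parts_pos: "admissible p \<Longrightarrow> \<forall>c\<in>set p. fst c \<ge> 1"
  by (induction p) (auto simp: adm_Cons V_def valid_cint_def split: colour.splits prod.splits)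

lemma len_le_psize: "\<forall>c\<in>set p. fst c \<ge> 1 \<Longrightarrow> length p \<le> psize p"
  by (induction p) auto

lemma part_le_psize: "c \<in> set p \<Longrightarrow> fst c \<le> psize p"
  by (induction p) auto

lemma fin_adm: "finite {p. admissible p \<and> psize p = n}"
proof -
  have fB: "finite ({..n} \<times> (UNIV :: colour set))" by (simp add: colour_UNIV)
  have "{p. admissible p \<and> psize p = n} \<subseteq> {xs. set xs \<subseteq> {..n} \<times> UNIV \<and> length xs \<le> n}"
    using adm_parts_pos len_le_psize part_le_psize by fastforce
  moreover have "finite {xs. set xs \<subseteq> {..n} \<times> (UNIV :: colour set) \<and> length xs \<le> n}"
    by (rule finite_lists_length_le[OF fB])
  ultimately show ?thesis by (rule finite_subset)
qed

definition PS :: "cint set \<Rightarrow> nat \<Rightarrow> nat \<Rightarrow> nat \<Rightarrow> cint list set" where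
  "PS S u v n = {p. admissible p \<and> (p \<noteq> [] \<longrightarrow> hd p \<in> S) \<and> psize p = n \<and> wt_u p = u \<and> wt_v p = v}"
definition cs :: "cint set \<Rightarrow> ser" where
  "cs S = (\<lambda>u v n. int (card (PS S u v n)))"
definition PS1 :: "cint \<Rightarrow> nat \<Rightarrow> nat \<Rightarrow> nat \<Rightarrow> cint list set" where
  "PS1 c u v n = {p. admissible p \<and> p \<noteq> [] \<and> hd p = c \<and> psize p = n \<and> wt_u p = u \<and> wt_v p = v}"
definition cs1 :: "cint \<Rightarrow> ser" where
  "cs1 c = (\<lambda>u v n. int (card (PS1 c u v n)))"
definition gk :: "nat \<Rightarrow> ser" where
  "gk t = cs {c. ckey c \<le> t}"

lemma fin_PS: "finite (PS S u v n)"
  by (rule finite_subset[OF _ fin_adm[of n]]) (auto simp: PS_def)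
lemma fin_PS1: "finite (PS1 c u v n)"
  by (rule finite_subset[OF _ fin_adm[of n]]) (auto simp: PS1_def)

lemma Gcoeff_gk: "(\<lambda>u v n. int (Gcoeff K u v n)) = gk (ckey K)"
  by (simp add: Gcoeff_def gk_def cs_def PS_def cle_def)

lemma cs_cong: "S \<inter> Collect V = S' \<inter> Collect V \<Longrightarrow> cs S = cs S'"
proof -
  assume H: "S \<inter> Collect V = S' \<inter> Collect V"
  have "PS S u v n = PS S' u v n" for u v n
    unfolding PS_def using H adm_hd_V by blast
  then show ?thesis by (simp add: cs_def)
qed

lemma cs_insert: "c \<notin> S \<Longrightarrow> cs (insert c S) = cs S + cs1 c"
proof -
  assume c: "c \<notin> S"
  have "PS (insert c S) u v n = PS S u v n \<union> PS1 c u v n" for u v n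
    by (auto simp: PS_def PS1_def)
  moreover have "PS S u v n \<inter> PS1 c u v n = {}" for u v n
    using c by (auto simp: PS_def PS1_def)
  ultimately have "card (PS (insert c S) u v n) = card (PS S u v n) + card (PS1 c u v n)" for u v n
    by (simp add: card_Un_disjoint fin_PS fin_PS1)
  then show ?thesis by (simp add: cs_def cs1_def plus_fun_def)
qed

definition sh :: "nat \<Rightarrow> nat \<Rightarrow> nat \<Rightarrow> ser \<Rightarrow> ser" where
  "sh i j k F = (\<lambda>u v n. if i \<le> u \<and> j \<le> v \<and> k \<le> n then F (u - i) (v - j) (n - k) else 0)"

lemma cs1_eq: "cs1 c = (if V c then sh (wuc c) (wvc c) (fst c) (cs {m. dok c m}) else 0)"
proof (cases "V c")
  case False
  then have "PS1 c u v n = {}" for u v n using adm_hd_V by (auto simp: PS1_def)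
  then show ?thesis using False by (simp add: cs1_def zero_fun_def)
next
  case True
  have "card (PS1 c u v n) = (if wuc c \<le> u \<and> wvc c \<le> v \<and> fst c \<le> n then
      card (PS {m. dok c m} (u - wuc c) (v - wvc c) (n - fst c)) else 0)" for u v n
  proof (cases "wuc c \<le> u \<and> wvc c \<le> v \<and> fst c \<le> n")
    case True2: True
    have "PS1 c u v n = (\<lambda>p. c # p) ` PS {m. dok c m} (u - wuc c) (v - wvc c) (n - fst c)"
    proof
      show "PS1 c u v n \<subseteq> (\<lambda>p. c # p) ` PS {m. dok c m} (u - wuc c) (v - wvc c) (n - fst c)"
      proof
        fix p assume "p \<in> PS1 c u v n"
        then obtain p' where p: "p = c # p'" "admissible (c # p')" "psize p = n" "wt_u p = u" "wt_v p = v"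
          unfolding PS1_def by (cases p) auto
        then have "p' \<in> PS {m. dok c m} (u - wuc c) (v - wvc c) (n - fst c)"
          by (auto simp: PS_def adm_Cons)
        then show "p \<in> (\<lambda>p. c # p) ` PS {m. dok c m} (u - wuc c) (v - wvc c) (n - fst c)"
          using p by blast
      qed
    next
      show "(\<lambda>p. c # p) ` PS {m. dok c m} (u - wuc c) (v - wvc c) (n - fst c) \<subseteq> PS1 c u v n"
        using True True2 by (auto simp: PS_def PS1_def adm_Cons)
    qed
    then show ?thesis using True2 by (simp add: card_image)
  next
    case False2: False
    have "PS1 c u v n = {}" using False2 by (auto simp: PS1_def neq_Nil_conv)
    then show ?thesis using False2 by auto
  qed
  then show ?thesis using True by (simp add: cs1_def sh_def cs_def fun_eq_iff)
qed



definition cok :: "nat \<Rightarrow> cint" where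
  "cok t = (if t mod 4 = 0 then (t div 4, Cab) else if t mod 4 = 1 then (t div 4, Ca)
     else if t mod 4 = 3 then (t div 4, Cb) else if odd (t div 4) then (t div 4, Cb2)
     else (t div 4 + 1, Ca2))"

lemma cok0: "cok (4*q) = (q, Cab)" by (simp add: cok_def)
lemma cok1: "cok (4*q+1) = (q, Ca)" by (simp add: cok_def)
lemma cok2: "cok (4*q+2) = (if odd q then (q, Cb2) else (q+1, Ca2))"
proof -
  have a: "(4*q+2) mod 4 = (2::nat)" by presburger
  have b: "(4*q+2) div 4 = q" by presburger
  show ?thesis unfolding cok_def a b by simp
qed
lemma cok3: "cok (4*q+3) = (q, Cb)" by (simp add: cok_def)

lemma V_cok: "V d \<Longrightarrow> d = cok (ckey d)"
proof -
  assume H: "V d"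
  obtain k x where d: "d = (k, x)" by (cases d)
  show ?thesis
  proof (cases x)
    case Ca2
    with H d obtain m where m: "k = 2*m+1" "m \<ge> 1"
      by (auto simp: V_def valid_cint_def elim!: oddE)
    have "ckey d = 4 * (2*m) + 2" using m d Ca2 by (simp add: ckey_def)
    then show ?thesis using m d Ca2 by (simp only: cok2) simp
  next
    case Cb2
    with H d obtain m where m: "k = 2*m+1"
      by (auto simp: V_def valid_cint_def elim!: oddE)
    have "ckey d = 4 * (2*m+1) + 2" using m d Cb2 by (simp add: ckey_def)
    then show ?thesis using m d Cb2 by (simp only: cok2) simp
  next
    case Ca then show ?thesis using d cok1[of k] by (simp add: ckey_def)
  next
    case Cb then show ?thesis using d cok3[of k] by (simp add: ckey_def)
  next
    case Cab then show ?thesis using d cok0[of k] by (simp add: ckey_def)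
  qed
qed

lemma V_key_ge5: "V d \<Longrightarrow> ckey d \<ge> 5"
  by (cases d) (auto simp: V_def valid_cint_def ckey_def split: colour.splits)

lemma gk_step: "ckey c = Suc t \<Longrightarrow> cok (Suc t) = c \<Longrightarrow> gk (Suc t) = gk t + cs1 c"
proof -
  assume k: "ckey c = Suc t" and c: "cok (Suc t) = c"
  have "{d. ckey d \<le> Suc t} \<inter> Collect V = insert c {d. ckey d \<le> t} \<inter> Collect V"
  proof (intro set_eqI iffI)
    fix d assume "d \<in> {d. ckey d \<le> Suc t} \<inter> Collect V"
    then have "V d" "ckey d \<le> Suc t" by auto
    then show "d \<in> insert c {d. ckey d \<le> t} \<inter> Collect V"
      using V_cok[of d] c by (cases "ckey d = Suc t") auto
  next
    fix d assume "d \<in> insert c {d. ckey d \<le> t} \<inter> Collect V"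
    then show "d \<in> {d. ckey d \<le> Suc t} \<inter> Collect V" using k by auto
  qed
  then have "gk (Suc t) = cs (insert c {d. ckey d \<le> t})" unfolding gk_def by (rule cs_cong)
  also have "\<dots> = gk t + cs1 c" using k by (simp add: cs_insert gk_def)
  finally show ?thesis .
qed

definition dl :: ser where "dl = (\<lambda>u v n. if u = 0 \<and> v = 0 \<and> n = 0 then 1 else 0)"

lemma gk_small: "t \<le> 4 \<Longrightarrow> gk t = dl"
proof -
  assume t: "t \<le> 4"
  have "{d. ckey d \<le> t} \<inter> Collect V = {} \<inter> Collect V" using t V_key_ge5 by fastforce
  then have "gk t = cs {}" unfolding gk_def by (rule cs_cong)
  moreover have "PS {} u v n = (if u = 0 \<and> v = 0 \<and> n = 0 then {[]} else {})" for u v n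
    by (auto simp: PS_def)
  ultimately show ?thesis by (simp add: cs_def dl_def fun_eq_iff)
qed

lemma cs1_notV: "\<not> V c \<Longrightarrow> cs1 c = 0"
  by (simp add: cs1_eq)



lemma al0: "V m \<Longrightarrow> dok (2*j+2, Cab) m \<longleftrightarrow> (ckey m \<le> 8*j+1 \<or> m = (2*j, Cb))"
  by (cases m; rename_tac k x; case_tac x) (auto simp: dok_def mindiff_def ckey_def V_def valid_cint_def; presburger)+
lemma al1: "V m \<Longrightarrow> dok (2*j+2, Ca) m \<longleftrightarrow> (ckey m \<le> 8*j+1 \<or> m = (2*j, Cb))"
  by (cases m; rename_tac k x; case_tac x) (auto simp: dok_def mindiff_def ckey_def V_def valid_cint_def; presburger)+
lemma al2: "V m \<Longrightarrow> dok (2*j+3, Ca2) m \<longleftrightarrow> (ckey m \<le> 8*j+1 \<or> m = (2*j, Cb))"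
  by (cases m; rename_tac k x; case_tac x) (auto simp: dok_def mindiff_def ckey_def V_def valid_cint_def; presburger)+
lemma al3: "V m \<Longrightarrow> dok (2*j+2, Cb) m \<longleftrightarrow> ckey m \<le> 8*j+5"
  by (cases m; rename_tac k x; case_tac x) (auto simp: dok_def mindiff_def ckey_def V_def valid_cint_def; presburger)+
lemma al4: "V m \<Longrightarrow> dok (2*j+3, Cab) m \<longleftrightarrow> ckey m \<le> 8*j+5"
  by (cases m; rename_tac k x; case_tac x) (auto simp: dok_def mindiff_def ckey_def V_def valid_cint_def; presburger)+
lemma al5: "V m \<Longrightarrow> dok (2*j+1, Ca) m \<longleftrightarrow> ckey m \<le> 8*j"
  by (cases m; rename_tac k x; case_tac x) (auto simp: dok_def mindiff_def ckey_def V_def valid_cint_def; presburger)+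
lemma al6: "V m \<Longrightarrow> dok (2*j+3, Cb2) m \<longleftrightarrow> ckey m \<le> 8*j+5"
  by (cases m; rename_tac k x; case_tac x) (auto simp: dok_def mindiff_def ckey_def V_def valid_cint_def; presburger)+
lemma al7: "V m \<Longrightarrow> dok (2*j+1, Cb) m \<longleftrightarrow> ckey m \<le> 8*j+1"
  by (cases m; rename_tac k x; case_tac x) (auto simp: dok_def mindiff_def ckey_def V_def valid_cint_def; presburger)+



definition rc :: "nat \<Rightarrow> ser" where "rc j = gk (8*j+1) + gk (8*j+3) - gk (8*j+2)"

lemma gk_step': "ckey c = t' \<Longrightarrow> t' = Suc t \<Longrightarrow> cok t' = c \<Longrightarrow> gk t' = gk t + cs1 c"
  using gk_step[of c t] by simp

lemma dok_cs: "(\<And>m. V m \<Longrightarrow> (dok c m \<longleftrightarrow> ckey m \<le> D)) \<Longrightarrow> cs {m. dok c m} = gk D"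
  unfolding gk_def by (rule cs_cong) auto

lemma cs1_b: "cs1 (2*j, Cb) = gk (8*j+3) - gk (8*j+2)"
proof -
  have "gk (4*(2*j)+3) = gk (8*j+2) + cs1 (2*j, Cb)"
    by (rule gk_step') (simp add: ckey_def, simp, simp only: cok3)
  then show ?thesis by simp
qed

lemma dok_rc: "(\<And>m. V m \<Longrightarrow> (dok c m \<longleftrightarrow> ckey m \<le> 8*j+1 \<or> m = (2*j, Cb))) \<Longrightarrow> cs {m. dok c m} = rc j"
proof -
  assume H: "\<And>m. V m \<Longrightarrow> (dok c m \<longleftrightarrow> ckey m \<le> 8*j+1 \<or> m = (2*j, Cb))"
  have "cs {m. dok c m} = cs (insert (2*j, Cb) {m. ckey m \<le> 8*j+1})"
    by (rule cs_cong) (use H in auto)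
  also have "\<dots> = gk (8*j+1) + cs1 (2*j, Cb)"
    by (subst cs_insert) (simp_all add: ckey_def gk_def)
  finally show ?thesis by (simp add: cs1_b rc_def)
qed

lemma R0: "gk (8*j+8) = gk (8*j+7) + sh 1 1 (2*j+2) (rc j)"
proof -
  have i: "4*(2*j+2) = 8*j+8" by simp
  have "gk (4*(2*j+2)) = gk (8*j+7) + cs1 (2*j+2, Cab)"
    by (rule gk_step') (simp add: ckey_def, simp, simp only: cok0)
  moreover have "cs1 (2*j+2, Cab) = sh 1 1 (2*j+2) (rc j)"
    proof -
      have "cs {m. dok (2*j+2, Cab) m} = (rc j)" by (rule dok_rc) (rule al0)
      then show ?thesis by (simp only: cs1_eq) (simp add: V_def valid_cint_def wuc_def wvc_def)
    qed
  ultimately show ?thesis by (simp only: i)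
qed

lemma R1: "gk (8*j+9) = gk (8*j+8) + sh 1 0 (2*j+2) (rc j)"
proof -
  have i: "4*(2*j+2)+1 = 8*j+9" by simp
  have "gk (4*(2*j+2)+1) = gk (8*j+8) + cs1 (2*j+2, Ca)"
    by (rule gk_step') (simp add: ckey_def, simp, simp only: cok1)
  moreover have "cs1 (2*j+2, Ca) = sh 1 0 (2*j+2) (rc j)"
    proof -
      have "cs {m. dok (2*j+2, Ca) m} = (rc j)" by (rule dok_rc) (rule al1)
      then show ?thesis by (simp only: cs1_eq) (simp add: V_def valid_cint_def wuc_def wvc_def)
    qed
  ultimately show ?thesis by (simp only: i)
qed

lemma R2: "gk (8*j+10) = gk (8*j+9) + sh 2 0 (2*j+3) (rc j)"
proof -
  have i: "4*(2*j+2)+2 = 8*j+10" by simp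
  have "gk (4*(2*j+2)+2) = gk (8*j+9) + cs1 (2*j+3, Ca2)"
    by (rule gk_step') (simp add: ckey_def, simp, simp only: cok2, simp)
  moreover have "cs1 (2*j+3, Ca2) = sh 2 0 (2*j+3) (rc j)"
    proof -
      have "cs {m. dok (2*j+3, Ca2) m} = (rc j)" by (rule dok_rc) (rule al2)
      then show ?thesis by (simp only: cs1_eq) (simp add: V_def valid_cint_def wuc_def wvc_def)
    qed
  ultimately show ?thesis by (simp only: i)
qed

lemma R3: "gk (8*j+11) = gk (8*j+10) + sh 0 1 (2*j+2) (gk (8*j+5))"
proof -
  have i: "4*(2*j+2)+3 = 8*j+11" by simp
  have "gk (4*(2*j+2)+3) = gk (8*j+10) + cs1 (2*j+2, Cb)"
    by (rule gk_step') (simp add: ckey_def, simp, simp only: cok3)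
  moreover have "cs1 (2*j+2, Cb) = sh 0 1 (2*j+2) (gk (8*j+5))"
    proof -
      have "cs {m. dok (2*j+2, Cb) m} = (gk (8*j+5))" by (rule dok_cs) (rule al3)
      then show ?thesis by (simp only: cs1_eq) (simp add: V_def valid_cint_def wuc_def wvc_def)
    qed
  ultimately show ?thesis by (simp only: i)
qed

lemma R4: "gk (8*j+12) = gk (8*j+11) + sh 1 1 (2*j+3) (gk (8*j+5))"
proof -
  have i: "4*(2*j+3) = 8*j+12" by simp
  have "gk (4*(2*j+3)) = gk (8*j+11) + cs1 (2*j+3, Cab)"
    by (rule gk_step') (simp add: ckey_def, simp, simp only: cok0)
  moreover have "cs1 (2*j+3, Cab) = sh 1 1 (2*j+3) (gk (8*j+5))"
    proof -
      have "cs {m. dok (2*j+3, Cab) m} = (gk (8*j+5))" by (rule dok_cs) (rule al4)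
      then show ?thesis by (simp only: cs1_eq) (simp add: V_def valid_cint_def wuc_def wvc_def)
    qed
  ultimately show ?thesis by (simp only: i)
qed

lemma R5: "gk (8*j+5) = gk (8*j+4) + sh 1 0 (2*j+1) (gk (8*j))"
proof -
  have i: "4*(2*j+1)+1 = 8*j+5" by simp
  have "gk (4*(2*j+1)+1) = gk (8*j+4) + cs1 (2*j+1, Ca)"
    by (rule gk_step') (simp add: ckey_def, simp, simp only: cok1)
  moreover have "cs1 (2*j+1, Ca) = sh 1 0 (2*j+1) (gk (8*j))"
    proof -
      have "cs {m. dok (2*j+1, Ca) m} = (gk (8*j))" by (rule dok_cs) (rule al5)
      then show ?thesis by (simp only: cs1_eq) (simp add: V_def valid_cint_def wuc_def wvc_def)
    qed
  ultimately show ?thesis by (simp only: i)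
qed

lemma R6: "gk (8*j+14) = gk (8*j+13) + sh 0 2 (2*j+3) (gk (8*j+5))"
proof -
  have i: "4*(2*j+3)+2 = 8*j+14" by simp
  have "gk (4*(2*j+3)+2) = gk (8*j+13) + cs1 (2*j+3, Cb2)"
    by (rule gk_step') (simp add: ckey_def, simp, simp only: cok2, simp)
  moreover have "cs1 (2*j+3, Cb2) = sh 0 2 (2*j+3) (gk (8*j+5))"
    proof -
      have "cs {m. dok (2*j+3, Cb2) m} = (gk (8*j+5))" by (rule dok_cs) (rule al6)
      then show ?thesis by (simp only: cs1_eq) (simp add: V_def valid_cint_def wuc_def wvc_def)
    qed
  ultimately show ?thesis by (simp only: i)
qed

lemma R7: "gk (8*j+7) = gk (8*j+6) + sh 0 1 (2*j+1) (gk (8*j+1))"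
proof -
  have i: "4*(2*j+1)+3 = 8*j+7" by simp
  have "gk (4*(2*j+1)+3) = gk (8*j+6) + cs1 (2*j+1, Cb)"
    by (rule gk_step') (simp add: ckey_def, simp, simp only: cok3)
  moreover have "cs1 (2*j+1, Cb) = sh 0 1 (2*j+1) (gk (8*j+1))"
    proof -
      have "cs {m. dok (2*j+1, Cb) m} = (gk (8*j+1))" by (rule dok_cs) (rule al7)
      then show ?thesis by (simp only: cs1_eq) (simp add: V_def valid_cint_def wuc_def wvc_def)
    qed
  ultimately show ?thesis by (simp only: i)
qed

lemma g6: "gk 6 = gk 5"
proof -
  have "gk (4*1+2) = gk 5 + cs1 (1, Cb2)"
    by (rule gk_step') (simp add: ckey_def, simp, simp only: cok2, simp)
  moreover have "cs1 (1, Cb2) = 0" by (simp add: cs1_notV V_def)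
  ultimately show ?thesis by simp
qed



definition sg :: "ser \<Rightarrow> ser" where
  "sg F = (\<lambda>u v n. if u \<le> n then F v u (n - u) else 0)"
definition P :: "ser \<Rightarrow> ser" where "P F = F + sh 1 0 1 F"

lemma sh_add: "sh i j k (F + G) = sh i j k F + sh i j k G"
  by (simp add: sh_def fun_eq_iff)
lemma sh_diff: "sh i j k (F - G) = sh i j k F - sh i j k G"
  by (simp add: sh_def fun_eq_iff)
lemma sh_sh: "sh i j k (sh i' j' k' F) = sh (i+i') (j+j') (k+k') F"
  by (auto simp: sh_def fun_eq_iff diff_diff_add add.commute)
lemma sg_add: "sg (F + G) = sg F + sg G"
  by (simp add: sg_def fun_eq_iff)
lemma sg_diff: "sg (F - G) = sg F - sg G"
  by (simp add: sg_def fun_eq_iff)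
lemma sg_sh: "sg (sh i j k F) = sh j i (k+j) (sg F)"
  by (auto simp: sh_def sg_def fun_eq_iff algebra_simps)
lemma sg_dl: "sg dl = dl"
  by (auto simp: sg_def dl_def fun_eq_iff)

lemmas L = sh_add sh_diff sh_sh sg_add sg_diff sg_sh P_def

abbreviation h where "h t \<equiv> sg (gk t)"

lemma E10: assumes E: "gk (8*j+8) = P (h (8*j+5))" and Z: "gk (8*j+9) = sh 1 0 1 (h (8*j+5)) + h (8*j+7)"
  shows "gk (8*j+10) = P (h (8*j+7))"
proof -
  have a: "sh 1 0 (2*j+2) (rc j) = gk (8*j+9) - gk (8*j+8)" using R1[of j] by simp
  have "gk (8*j+10) = gk (8*j+9) + sh 1 0 1 (sh 1 0 (2*j+2) (rc j))" unfolding R2 by (simp add: sh_sh algebra_simps del: add_2_eq_Suc add_2_eq_Suc' One_nat_def)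
  also have "\<dots> = P (h (8*j+7))" unfolding a E Z by (simp add: L algebra_simps del: add_2_eq_Suc add_2_eq_Suc' One_nat_def)
  finally show ?thesis .
qed

lemma h9: assumes Y: "gk (8*j+5) = P (sg (rc j))"
  shows "h (8*j+9) = h (8*j+7) + sh 0 1 (2*j+2) (gk (8*j+5))"
  unfolding R1 R0 Y by (simp add: L algebra_simps del: add_2_eq_Suc add_2_eq_Suc' One_nat_def)

lemma E12: assumes Y: "gk (8*j+5) = P (sg (rc j))" and E10: "gk (8*j+10) = P (h (8*j+7))"
  shows "gk (8*j+12) = P (h (8*j+9))"
  unfolding R4 R3 E10 h9[OF Y] by (simp add: L algebra_simps del: add_2_eq_Suc add_2_eq_Suc' One_nat_def)

lemma R5': "gk (8*j+13) = gk (8*j+12) + sh 1 0 (2*j+3) (gk (8*j+8))"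
proof -
  have i: "8*(j+1)+5 = 8*j+13" "8*(j+1)+4 = 8*j+12" "2*(j+1)+1 = 2*j+3" "8*(j+1) = 8*j+8" by simp_all
  from R5[of "j+1"] show ?thesis unfolding i[symmetric] by simp
qed
lemma R7': "gk (8*j+15) = gk (8*j+14) + sh 0 1 (2*j+3) (gk (8*j+9))"
proof -
  have i: "8*(j+1)+7 = 8*j+15" "8*(j+1)+6 = 8*j+14" "2*(j+1)+1 = 2*j+3" "8*(j+1)+1 = 8*j+9" by simp_all
  from R7[of "j+1"] show ?thesis unfolding i[symmetric] by simp
qed
lemma R0': "gk (8*j+16) = gk (8*j+15) + sh 1 1 (2*j+4) (rc (j+1))"
proof -
  have i: "8*(j+1)+8 = 8*j+16" "8*(j+1)+7 = 8*j+15" "2*(j+1)+2 = 2*j+4" by simp_all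
  from R0[of "j+1"] show ?thesis unfolding i[symmetric] by simp
qed
lemma R1': "gk (8*j+17) = gk (8*j+16) + sh 1 0 (2*j+4) (rc (j+1))"
proof -
  have i: "8*(j+1)+9 = 8*j+17" "8*(j+1)+8 = 8*j+16" "2*(j+1)+2 = 2*j+4" by simp_all
  from R1[of "j+1"] show ?thesis unfolding i[symmetric] by simp
qed
lemma rc_suc: "rc (j+1) = gk (8*j+9) + sh 0 1 (2*j+2) (gk (8*j+5))"
proof -
  have i: "8*(j+1)+1 = 8*j+9" "8*(j+1)+3 = 8*j+11" "8*(j+1)+2 = 8*j+10" by simp_all
  show ?thesis unfolding rc_def i R3 by simp
qed

lemma E14: assumes Y: "gk (8*j+5) = P (sg (rc j))" and E: "gk (8*j+8) = P (h (8*j+5))"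
  and E12: "gk (8*j+12) = P (h (8*j+9))"
  shows "gk (8*j+14) = P (h (8*j+11))"
  unfolding R6 R5' E12 R3 R2 E Y by (simp add: L algebra_simps del: add_2_eq_Suc add_2_eq_Suc' One_nat_def)

lemma R4'': "h (8*j+12) = h (8*j+11) + sh 1 1 (2*j+4) (h (8*j+5))"
  unfolding R4 by (simp add: L algebra_simps del: add_2_eq_Suc add_2_eq_Suc' One_nat_def)

lemma E16: assumes Y: "gk (8*j+5) = P (sg (rc j))" and Z: "gk (8*j+9) = sh 1 0 1 (h (8*j+5)) + h (8*j+7)"
  and E14: "gk (8*j+14) = P (h (8*j+11))"
  shows "gk (8*j+16) = P (h (8*j+13))"
proof -
  have h8: "h (8*j+8) = h (8*j+7) + sh 1 1 (2*j+3) (sg (rc j))" unfolding R0 by (simp add: L algebra_simps del: add_2_eq_Suc add_2_eq_Suc' One_nat_def)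
  have h13: "h (8*j+13) = h (8*j+11) + sh 1 1 (2*j+4) (h (8*j+5)) + sh 0 1 (2*j+3) (h (8*j+8))"
    unfolding R5' R4 by (simp add: L algebra_simps del: add_2_eq_Suc add_2_eq_Suc' One_nat_def)
  show ?thesis unfolding R0' R7' E14 rc_suc h13 h8 Z Y by (simp add: L algebra_simps del: add_2_eq_Suc add_2_eq_Suc' One_nat_def)
qed

lemma Y': assumes Y: "gk (8*j+5) = P (sg (rc j))" and E: "gk (8*j+8) = P (h (8*j+5))"
  and E12: "gk (8*j+12) = P (h (8*j+9))"
  shows "gk (8*(j+1)+5) = P (sg (rc (j+1)))"
proof -
  have i: "8*(j+1)+5 = 8*j+13" by simp
  show ?thesis unfolding i R5' E12 E rc_suc by (simp add: L algebra_simps del: add_2_eq_Suc add_2_eq_Suc' One_nat_def)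
qed

lemma Z': assumes Y: "gk (8*j+5) = P (sg (rc j))" and Z: "gk (8*j+9) = sh 1 0 1 (h (8*j+5)) + h (8*j+7)"
  and E16: "gk (8*j+16) = P (h (8*j+13))"
  shows "gk (8*(j+1)+9) = sh 1 0 1 (h (8*(j+1)+5)) + h (8*(j+1)+7)"
proof -
  have i: "8*(j+1)+9 = 8*j+17" "8*(j+1)+5 = 8*j+13" "8*(j+1)+7 = 8*j+15" by simp_all
  have h15: "h (8*j+15) = h (8*j+13) + sh 2 0 (2*j+5) (h (8*j+5)) + sh 1 0 (2*j+4) (h (8*j+9))"
    unfolding R7' R6 by (simp add: L algebra_simps del: add_2_eq_Suc add_2_eq_Suc' One_nat_def)
  show ?thesis unfolding i R1' E16 h15 h9[OF Y] rc_suc unfolding Z by (simp add: L algebra_simps del: add_2_eq_Suc add_2_eq_Suc' One_nat_def)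
qed

definition Q :: "nat \<Rightarrow> bool" where
  "Q j = (gk (8*j+8) = P (h (8*j+5)) \<and> gk (8*j+5) = P (sg (rc j)) \<and>
          gk (8*j+9) = sh 1 0 1 (h (8*j+5)) + h (8*j+7))"

lemma Q0: "Q 0"
proof -
  have rc0: "rc 0 = dl" by (simp add: rc_def gk_small)
  have g5: "gk 5 = dl + sh 1 0 1 dl" using R5[of 0] by (simp add: gk_small del: add_2_eq_Suc add_2_eq_Suc' One_nat_def)
  have g7: "gk 7 = gk 5 + sh 0 1 1 dl" using R7[of 0] by (simp add: gk_small g6 del: add_2_eq_Suc add_2_eq_Suc' One_nat_def)
  have g8: "gk 8 = gk 7 + sh 1 1 2 dl" using R0[of 0] by (simp add: rc0 del: add_2_eq_Suc add_2_eq_Suc' One_nat_def)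
  have g9: "gk 9 = gk 8 + sh 1 0 2 dl" using R1[of 0] by (simp add: rc0 del: add_2_eq_Suc add_2_eq_Suc' One_nat_def)
  show ?thesis unfolding Q_def by (simp add: rc0 g9 g8 g7 g5 L sg_dl algebra_simps del: add_2_eq_Suc add_2_eq_Suc' One_nat_def)
qed

lemma Q_step: "Q j \<Longrightarrow> Q (j+1)"
proof -
  assume "Q j"
  then have E: "gk (8*j+8) = P (h (8*j+5))" and Y: "gk (8*j+5) = P (sg (rc j))"
    and Z: "gk (8*j+9) = sh 1 0 1 (h (8*j+5)) + h (8*j+7)" by (auto simp: Q_def)
  note e10 = E10[OF E Z]
  note e12 = E12[OF Y e10]
  note e14 = E14[OF Y E e12]
  note e16 = E16[OF Y Z e14]
  have i: "8*(j+1)+8 = 8*j+16" "8*(j+1)+5 = 8*j+13" by simp_all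
  show ?thesis unfolding Q_def using e16 Y'[OF Y E e12] Z'[OF Y Z e16] unfolding i by simp
qed

lemma Q_all: "Q j"
proof (induction j)
  case 0 show ?case by (rule Q0)
next
  case (Suc j) then show ?case using Q_step[of j] by simp
qed


lemma tr: "(\<lambda>u v n. int (times_1_aq (subst_b_aq F) u v n)) = P (sg (\<lambda>u v n. int (F u v n)))"
  by (auto simp: times_1_aq_def subst_b_aq_def P_def sg_def sh_def fun_eq_iff)

lemma lift_inj:
  assumes H: "(\<lambda>u v n. int (F u v n)) = (\<lambda>u v n. int (G u v n))"
  shows "F = G"
proof (intro ext)
  fix u v n
  have "int (F u v n) = int (G u v n)" using fun_cong[OF fun_cong[OF fun_cong[OF H]]] by simp
  then show "F u v n = G u v n" by simp
qed

lemma main_eq: "gk (ckey K1) = P (sg (gk (ckey K2))) \<Longrightarrow> Gcoeff K1 = times_1_aq (subst_b_aq (Gcoeff K2))"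
  by (rule lift_inj) (simp add: tr Gcoeff_gk)

theorem proposition2p1:
  fixes k :: nat
  assumes "k \<ge> 1"
  shows "Gcoeff (2*k+1, Cab) = times_1_aq (subst_b_aq (Gcoeff (2*k, Ca))) \<and>
    Gcoeff (2*k+1, Cb2) = times_1_aq (subst_b_aq (Gcoeff (2*k, Cb))) \<and>
    Gcoeff (2*k+2, Cab) = times_1_aq (subst_b_aq (Gcoeff (2*k+1, Ca))) \<and>
    Gcoeff (2*k+1, Ca2) = times_1_aq (subst_b_aq (Gcoeff (2*k-1, Cb)))"
proof -
  obtain j where kj: "k = j + 1" using assms by (metis le_add_diff_inverse2)
  have "Q j" by (rule Q_all)
  then have E: "gk (8*j+8) = P (h (8*j+5))" and Y: "gk (8*j+5) = P (sg (rc j))"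
    and Z: "gk (8*j+9) = sh 1 0 1 (h (8*j+5)) + h (8*j+7)" by (auto simp: Q_def)
  note e10 = E10[OF E Z]
  note e12 = E12[OF Y e10]
  note e14 = E14[OF Y E e12]
  note e16 = E16[OF Y Z e14]
  have k1: "ckey (2*k+1, Cab) = 8*j+12" "ckey (2*k, Ca) = 8*j+9"
    "ckey (2*k+1, Cb2) = 8*j+14" "ckey (2*k, Cb) = 8*j+11"
    "ckey (2*k+2, Cab) = 8*j+16" "ckey (2*k+1, Ca) = 8*j+13"
    "ckey (2*k+1, Ca2) = 8*j+10" "ckey (2*k-1, Cb) = 8*j+7"
    using kj by (simp_all add: ckey_def)
  show ?thesis
    by (intro conjI main_eq) (simp_all only: k1 e10 e12 e14 e16)
qed

end
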